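(* Let $\mathbb{F}_q$ be a finite field and $\chi$ its canonical additive character. The eigenvalues (listed with multiplicity) of the adjacency matrix of the special unit-graph on $\operatorname{Mat}_2(\mathbb{F}_q)$ are: $\lambda = q^3 - q$ with multiplicity $1$; $\mu_0 = -q$ with multiplicity $q^3+q^2-q-1$; and, for each $\delta \in \mathbb{F}_q^{\ast}$, $\mu_\delta = q\sum_{\alpha \in \mathbb{F}_q^{\ast}} \chi(\alpha + \delta\alpha^{-1})$ with multiplicity $q^3 - q$.
   Context: The special unit-graph on $\operatorname{Mat}_2(\mathbb{F}_q)$ is the Cayley graph $\operatorname{Cay}(\operatorname{Mat}_2(\mathbb{F}_q), \operatorname{SL}_2(\mathbb{F}_q))$: vertex set $\operatorname{Mat}_2(\mathbb{F}_q)$, with $A$ adjacent to $B$ iff $\det(B-A)=1$ (this relation is symmetric for $2\times 2$ matrices). The canonical additive character of $\mathbb{F}_q$, where $q=p^m$ with $p$ prime, is $\chi(x) = \exp(2\pi i \operatorname{Tr}_{\mathbb{F}_q/\mathbb{F}_p}(x)/p)$. *)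

theory Defs
  imports "HOL-Analysis.Analysis"
begin

text \<open>Finite field F_q is modelled as a type 'a of class {finite, field};
  q = CARD('a), p = CHAR('a), and q = p^m.\<close>

definition fq_degree :: "'a::{finite,field} itself \<Rightarrow> nat" where
  "fq_degree T = (THE m. CARD('a) = CHAR('a) ^ m)"

definition fq_trace :: "'a::{finite,field} \<Rightarrow> 'a" where
  "fq_trace x = (\<Sum>i<fq_degree TYPE('a). x ^ (CHAR('a) ^ i))"

definition canonical_char :: "'a::{finite,field} \<Rightarrow> complex" where
  "canonical_char x =
     (let k = (THE k. k < CHAR('a) \<and> of_nat k = fq_trace x)
      in exp (2 * pi * \<i> * of_nat k / of_nat CHAR('a)))"

text \<open>Adjacency matrix of the special unit-graph Cay(Mat_2(F_q), SL_2(F_q)):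
  vertices are 2x2 matrices over 'a, A adjacent to B iff det (B - A) = 1.\<close>
definition special_unit_adj :: "complex ^ ('a::{finite,field} ^ 2 ^ 2) ^ ('a ^ 2 ^ 2)" where
  "special_unit_adj = (\<chi> A B. if det (B - A) = (1::'a) then 1 else 0)"

definition char_poly_mat :: "complex ^ 'n ^ 'n \<Rightarrow> complex poly" where
  "char_poly_mat M = det (\<chi> i j. (if i = j then [:0, 1:] else 0) - [: M $ i $ j :])"

end

theory Submission imports Defs "HOL-Algebra.Sylow" "HOL-Algebra.Multiplicative_Group" begin


lemma char_prime: "prime CHAR('a::{finite,field})"
  by (rule prime_CHAR_semidom) (rule finite_imp_CHAR_pos, simp)

lemma char_gt1: "CHAR('a::{finite,field}) > 1"
  using char_prime[where 'a='a] prime_gt_1_nat by blast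

definition addgrp :: "'a::{finite,field} itself \<Rightarrow> 'a monoid" where
  "addgrp T = \<lparr>carrier = UNIV, monoid.mult = (+), one = 0\<rparr>"

lemma addgrp_group: "group (addgrp TYPE('a::{finite,field}))"
  unfolding addgrp_def
  by (rule groupI) (auto simp: add.assoc intro: exI[of _ "- x" for x])

lemma addgrp_pow:
  fixes x :: "'a::{finite,field}"
  shows "x [^]\<^bsub>(addgrp TYPE('a))\<lparr>carrier := H\<rparr>\<^esub> (n::nat) = of_nat n * x"
  by (induction n) (simp_all add: addgrp_def distrib_right)

lemma prime_factor_is_char:
  fixes r :: nat
  assumes r: "prime r" "r dvd CARD('a::{finite,field})"
  shows "r = CHAR('a)"
proof -
  let ?G = "addgrp TYPE('a)"
  let ?q = "CARD('a)"
  define a where "a = multiplicity r ?q"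
  have q0: "?q > 0" by simp
  have "r ^ a dvd ?q" unfolding a_def by (rule multiplicity_dvd)
  then obtain m where qm: "?q = r ^ a * m" by blast
  have a1: "a \<ge> 1"
    unfolding a_def using r q0 by (intro multiplicity_geI) auto
  have "order ?G = r ^ a * m"
    using qm by (simp add: order_def addgrp_def)
  then obtain H where H: "subgroup H ?G" "card H = r ^ a"
    using sylow_thm[OF r(1) addgrp_group] by (auto simp: addgrp_def)
  have "card H \<ge> 2"
  proof -
    have "r ^ 1 \<le> r ^ a" using a1 prime_gt_0_nat[OF r(1)] by (intro power_increasing) auto
    thus ?thesis using H(2) prime_ge_2_nat[OF r(1)] by simp
  qed
  have "\<exists>x\<in>H. x \<noteq> 0"
  proof (rule ccontr)
    assume "\<not> ?thesis"
    hence "H \<subseteq> {0}" by auto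
    hence "card H \<le> card {0::'a}" by (intro card_mono) auto
    hence "card H \<le> 1" by simp
    thus False using \<open>card H \<ge> 2\<close> by simp
  qed
  then obtain x where x: "x \<in> H" "x \<noteq> 0" by blast
  interpret GH: group "?G\<lparr>carrier := H\<rparr>"
    using group.subgroup_imp_group[OF addgrp_group H(1)] .
  have "x [^]\<^bsub>?G\<lparr>carrier := H\<rparr>\<^esub> order (?G\<lparr>carrier := H\<rparr>) = \<one>\<^bsub>?G\<lparr>carrier := H\<rparr>\<^esub>"
    by (rule GH.pow_order_eq_1) (simp add: x)
  hence "of_nat (r ^ a) * x = 0"
    by (simp add: addgrp_pow order_def H(2)) (simp add: addgrp_def)
  hence "of_nat (r ^ a) = (0::'a)" using x by simp
  hence "CHAR('a) dvd r ^ a" using of_nat_eq_0_iff_char_dvd by blast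
  hence "CHAR('a) dvd r" using char_prime prime_dvd_power by blast
  thus ?thesis using r(1) char_prime[where 'a='a]
    by (metis primes_dvd_imp_eq)
qed

lemma card_prime_power: "\<exists>m. CARD('a::{finite,field}) = CHAR('a) ^ m"
proof -
  let ?q = "CARD('a)"
  have sub: "prime_factors ?q \<subseteq> {CHAR('a)}"
    using prime_factor_is_char[where 'a='a]
    by (auto simp: in_prime_factors_iff)
  have "?q = (\<Prod>p \<in> prime_factors ?q. p ^ multiplicity p ?q)"
    by (rule prime_factorization_nat) simp
  also have "\<dots> = CHAR('a) ^ multiplicity CHAR('a) ?q"
  proof (cases "prime_factors ?q = {}")
    case True
    then have "?q = 1" using prime_factorization_nat[of ?q] by simp
    then show ?thesis using True by simp
  next
    case False
    then have "prime_factors ?q = {CHAR('a)}" using sub by blast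
    then show ?thesis by simp
  qed
  finally show ?thesis by blast
qed



lemma fq_degree_eq: "CARD('a::{finite,field}) = CHAR('a) ^ fq_degree TYPE('a)"
proof -
  obtain m where m: "CARD('a) = CHAR('a) ^ m" using card_prime_power by blast
  have "\<exists>!m. CARD('a) = CHAR('a) ^ m"
  proof (rule ex1I[of _ m])
    show "CARD('a) = CHAR('a) ^ m" by (rule m)
    fix k assume "CARD('a) = CHAR('a) ^ k"
    thus "k = m" using m char_gt1[where 'a='a] power_inject_exp by metis
  qed
  thus ?thesis unfolding fq_degree_def by (rule theI')
qed

lemma fq_degree_pos: "fq_degree TYPE('a::{finite,field}) > 0"
proof (rule ccontr)
  assume "\<not> ?thesis"
  hence "CARD('a) = 1" using fq_degree_eq[where 'a='a] by simp
  moreover have "CARD('a) \<ge> 2"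
  proof -
    have "{0::'a, 1} \<subseteq> UNIV" by simp
    hence "card {0::'a,1} \<le> CARD('a)" by (intro card_mono) auto
    thus ?thesis by simp
  qed
  ultimately show False by simp
qed

lemma power_card_same: "(x::'a::{finite,field}) ^ CARD('a) = x"
proof (cases "x = 0")
  case False
  have "x * (\<Prod>y\<in>UNIV-{0}. x * y) = x * x ^ (card (UNIV :: 'a set) - 1) * \<Prod>(UNIV-{0})"
    by (simp add: prod.distrib mult_ac)
  also have "x * x ^ (card (UNIV :: 'a set) - 1) = x ^ Suc (card (UNIV :: 'a set) - 1)"
    by (subst power_Suc) auto
  also have "Suc (card (UNIV :: 'a set) - 1) = card (UNIV :: 'a set)"
    using finite_UNIV_card_ge_0[where ?'a = 'a] by simp
  also have "(\<Prod>y\<in>UNIV-{0}. x * y) = (\<Prod>y\<in>UNIV-{0}. y)"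
    by (rule prod.reindex_bij_witness[of _ "\<lambda>y. y / x" "\<lambda>y. x * y"]) (use False in auto)
  finally show ?thesis
    by simp
qed (use finite_UNIV_card_ge_0[where ?'a = 'a] in auto)

lemma trace_add: "fq_trace (x + y) = fq_trace x + fq_trace (y::'a::{finite,field})"
  unfolding fq_trace_def sum.distrib[symmetric]
  by (intro sum.cong refl freshmans_dream') (auto simp: char_prime)

lemma trace_pow: "fq_trace (x::'a::{finite,field}) ^ CHAR('a) = fq_trace x"
proof -
  let ?p = "CHAR('a)" and ?m = "fq_degree TYPE('a)"
  define f where "f i = x ^ (?p ^ i)" for i
  have "fq_trace x ^ ?p = (\<Sum>i<?m. (x ^ (?p ^ i)) ^ ?p)"
    unfolding fq_trace_def by (rule freshmans_dream_sum) (auto simp: char_prime)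
  also have "\<dots> = (\<Sum>i<?m. f (Suc i))"
    by (simp add: f_def power_mult[symmetric] mult.commute)
  also have "\<dots> = (\<Sum>i<?m. f i)"
  proof -
    have fm: "f ?m = f 0"
      unfolding f_def using power_card_same[of x] fq_degree_eq[where 'a='a] by simp
    have "f 0 + (\<Sum>i<?m. f (Suc i)) = (\<Sum>i<Suc ?m. f i)"
      by (simp only: sum.lessThan_Suc_shift)
    also have "\<dots> = (\<Sum>i<?m. f i) + f ?m" by (simp only: sum.lessThan_Suc)
    finally show ?thesis using fm by (simp add: add.commute)
  qed
  finally show ?thesis by (simp add: f_def fq_trace_def)
qed

lemma of_nat_pow_char: "(of_nat k :: 'a::{finite,field}) ^ CHAR('a) = of_nat k"
proof (induction k)
  case 0 then show ?case using char_gt1[where 'a='a] by simp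
next
  case (Suc k)
  have "(of_nat (Suc k) :: 'a) ^ CHAR('a) = (of_nat k + 1) ^ CHAR('a)" by (simp add: add.commute)
  also have "\<dots> = of_nat k ^ CHAR('a) + 1 ^ CHAR('a)"
    by (rule freshmans_dream) (auto simp: char_prime)
  finally show ?case using Suc by simp
qed

lemma of_nat_inj_char:
  assumes "i < CHAR('a::{finite,field})" "j < CHAR('a)" "(of_nat i :: 'a) = of_nat j"
  shows "i = j"
proof (rule ccontr)
  assume ne: "i \<noteq> j"
  { fix i j :: nat assume ij: "i < j" "j < CHAR('a)" "(of_nat i :: 'a) = of_nat j"
    have "of_nat j = (of_nat (j - i) :: 'a) + of_nat i" using ij by (simp add: of_nat_diff)
    hence "(of_nat (j - i) :: 'a) = 0" using ij by simp
    hence "CHAR('a) dvd j - i" using of_nat_eq_0_iff_char_dvd by blast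
    hence False using ij by (simp add: nat_dvd_not_less) }
  thus False using ne assms by (metis linorder_neqE_nat)
qed

lemma fixed_is_prime_sub:
  assumes "(y::'a::{finite,field}) ^ CHAR('a) = y"
  shows "\<exists>k<CHAR('a). y = of_nat k"
proof -
  let ?p = "CHAR('a)"
  define P :: "'a poly" where "P = Polynomial.monom 1 ?p - [:0, 1:]"
  have p1: "?p > 1" by (rule char_gt1)
  have cP: "Polynomial.coeff P ?p = 1" using p1 by (simp add: P_def coeff_pCons split: nat.split)
  hence P0: "P \<noteq> 0" by auto
  have dP: "degree P \<le> ?p" unfolding P_def
    by (intro degree_diff_le) (use p1 in \<open>auto simp: degree_monom_le\<close>)
  have evalP: "poly P z = z ^ ?p - z" for z by (simp add: P_def poly_monom)
  define R where "R = {z. poly P z = 0}"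
  have cR: "card R \<le> ?p" using card_poly_roots_bound[OF P0] dP unfolding R_def by linarith
  have sub: "of_nat ` {..<?p} \<subseteq> R" unfolding R_def evalP by (auto simp: of_nat_pow_char)
  have cS: "card (of_nat ` {..<?p} :: 'a set) = ?p"
    by (subst card_image) (auto intro!: inj_onI of_nat_inj_char)
  have fR: "finite R" by simp
  have "card (of_nat ` {..<?p} :: 'a set) \<le> card R" by (rule card_mono[OF fR sub])
  hence "of_nat ` {..<?p} = R"
    using card_subset_eq[OF fR sub] cS cR by simp
  moreover have "y \<in> R" unfolding R_def evalP using assms by simp
  ultimately show ?thesis by auto
qed

definition tr_idx :: "'a::{finite,field} \<Rightarrow> nat" where
  "tr_idx x = (THE k. k < CHAR('a) \<and> of_nat k = fq_trace x)"

lemma tr_idx: "tr_idx x < CHAR('a::{finite,field}) \<and> (of_nat (tr_idx x) :: 'a) = fq_trace x"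
proof -
  obtain k where k: "k < CHAR('a)" "fq_trace x = of_nat k"
    using fixed_is_prime_sub[OF trace_pow[of x]] by blast
  have "\<exists>!k. k < CHAR('a) \<and> (of_nat k :: 'a) = fq_trace x"
    using k of_nat_inj_char[where 'a='a] by (intro ex1I[of _ k]) auto
  thus ?thesis unfolding tr_idx_def by (rule theI')
qed

lemma canonical_char_idx:
  "canonical_char (x::'a::{finite,field}) = exp (2 * pi * \<i> * of_nat (tr_idx x) / of_nat CHAR('a))"
  unfolding canonical_char_def tr_idx_def Let_def ..

lemma exp_mod:
  assumes "(n::nat) > 0"
  shows "exp (2 * pi * \<i> * of_nat (a mod n) / of_nat n) = exp (2 * pi * \<i> * of_nat a / of_nat n)"
proof -
  have "a = a mod n + n * (a div n)" by simp
  hence "(of_nat a :: complex) = of_nat (a mod n) + of_nat n * of_nat (a div n)"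
    by (metis of_nat_add of_nat_mult)
  hence "2 * pi * \<i> * of_nat a / of_nat n
        = 2 * pi * \<i> * of_nat (a mod n) / of_nat n + 2 * pi * \<i> * of_nat (a div n)"
    using assms by (simp add: field_simps)
  hence "exp (2 * pi * \<i> * of_nat a / of_nat n)
        = exp (2 * pi * \<i> * of_nat (a mod n) / of_nat n) * exp (2 * pi * \<i> * of_nat (a div n))"
    by (simp add: exp_add)
  moreover have "exp (2 * pi * \<i> * of_nat (a div n)) = 1"
    using complex_root_unity_eq_1[of 1 "a div n"] by simp
  ultimately show ?thesis by simp
qed

lemma char_add: "canonical_char (x + y) = canonical_char x * canonical_char (y::'a::{finite,field})"
proof -
  let ?p = "CHAR('a)"
  have p0: "?p > 0" using char_gt1[where 'a='a] by simp
  have "(of_nat (tr_idx (x + y)) :: 'a) = of_nat ((tr_idx x + tr_idx y) mod ?p)"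
  proof -
    have "(of_nat ((tr_idx x + tr_idx y) mod ?p) :: 'a) = of_nat (tr_idx x + tr_idx y)"
    proof -
      have "tr_idx x + tr_idx y = (tr_idx x + tr_idx y) mod ?p + ?p * ((tr_idx x + tr_idx y) div ?p)" by simp
      hence "(of_nat (tr_idx x + tr_idx y) :: 'a) = of_nat ((tr_idx x + tr_idx y) mod ?p) + of_nat ?p * of_nat ((tr_idx x + tr_idx y) div ?p)"
        by (metis of_nat_add of_nat_mult)
      thus ?thesis by simp
    qed
    thus ?thesis using tr_idx[of x] tr_idx[of y] tr_idx[of "x+y"] by (simp add: trace_add)
  qed
  hence eq: "tr_idx (x + y) = (tr_idx x + tr_idx y) mod ?p"
    using tr_idx[of "x+y"] p0 by (intro of_nat_inj_char) auto
  show ?thesis unfolding canonical_char_idx eq exp_mod[OF p0]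
    by (simp add: exp_add[symmetric] add_divide_distrib distrib_left)
qed

lemma trace_nonzero: "\<exists>x::'a::{finite,field}. fq_trace x \<noteq> 0"
proof (rule ccontr)
  assume "\<not> ?thesis"
  hence all0: "fq_trace x = 0" for x :: 'a by blast
  let ?p = "CHAR('a)" and ?m = "fq_degree TYPE('a)"
  define P :: "'a poly" where "P = (\<Sum>i<?m. Polynomial.monom 1 (?p ^ i))"
  have m0: "?m > 0" by (rule fq_degree_pos)
  have p1: "?p > 1" by (rule char_gt1)
  have "Polynomial.coeff P (?p ^ (?m - 1)) = (\<Sum>i<?m. if ?p ^ i = ?p ^ (?m - 1) then 1 else 0)"
    by (simp add: P_def coeff_sum coeff_monom)
  also have "\<dots> = (\<Sum>i\<in>{?m - 1}. 1)"
    by (rule sum.mono_neutral_cong_right) (use m0 p1 power_inject_exp in auto)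
  finally have "Polynomial.coeff P (?p ^ (?m - 1)) = 1" by simp
  hence P0: "P \<noteq> 0" by auto
  have dP: "degree P \<le> ?p ^ (?m - 1)" unfolding P_def
  proof (rule degree_sum_le)
    fix i assume "i \<in> {..<?m}"
    hence "?p ^ i \<le> ?p ^ (?m - 1)" using p1 by (intro power_increasing) auto
    thus "degree (Polynomial.monom (1::'a) (?p ^ i)) \<le> ?p ^ (?m - 1)" using degree_monom_le le_trans by blast
  qed simp
  have "{z. poly P z = 0} = UNIV"
    using all0 by (auto simp: P_def poly_sum poly_monom fq_trace_def)
  hence "CARD('a) \<le> ?p ^ (?m - 1)" using card_poly_roots_bound[OF P0] dP by simp
  moreover have "?p ^ (?m - 1) < ?p ^ ?m" using p1 m0 by (intro power_strict_increasing) auto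
  ultimately show False using fq_degree_eq[where 'a='a] by simp
qed

lemma char_nontrivial: "\<exists>x::'a::{finite,field}. canonical_char x \<noteq> 1"
proof -
  obtain x :: 'a where x: "fq_trace x \<noteq> 0" using trace_nonzero by blast
  have k1: "tr_idx x < CHAR('a)" using tr_idx[of x] by auto
  have k2: "tr_idx x \<noteq> 0" using tr_idx[of x] x by (metis of_nat_0)
  note k = k1 k2
  have "\<not> CHAR('a) dvd tr_idx x" using k by (auto dest: dvd_imp_le)
  hence "canonical_char x \<noteq> 1"
    unfolding canonical_char_idx using complex_root_unity_eq_1[of "CHAR('a)" "tr_idx x"] char_gt1[where 'a='a]
    by simp
  thus ?thesis by blast
qed

lemma char_zero [simp]: "canonical_char (0::'a::{finite,field}) = 1"
proof -
  have e: "canonical_char (0::'a) * canonical_char (0::'a) = canonical_char (0::'a) * 1"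
    using char_add[of "0::'a" 0] by simp
  moreover have "canonical_char (0::'a) \<noteq> 0" by (simp add: canonical_char_idx)
  ultimately show ?thesis by (metis mult_left_cancel)
qed

lemma char_neg: "canonical_char (- x) * canonical_char (x::'a::{finite,field}) = 1"
  using char_add[of "-x" x] by simp

lemma char_sum_all: "(\<Sum>x\<in>UNIV. canonical_char (x::'a::{finite,field})) = 0"
proof -
  obtain a :: 'a where a: "canonical_char a \<noteq> 1" using char_nontrivial by blast
  have "(\<Sum>x\<in>UNIV. canonical_char (x::'a)) = (\<Sum>x\<in>UNIV. canonical_char (x + a))"
    by (rule sum.reindex_bij_witness[of _ "\<lambda>x. x + a" "\<lambda>x. x - a"]) auto
  also have "\<dots> = (\<Sum>x\<in>UNIV. canonical_char (x::'a)) * canonical_char a"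
    by (simp add: char_add sum_distrib_right)
  finally have "(\<Sum>x\<in>UNIV. canonical_char (x::'a)) * 1 = (\<Sum>x\<in>UNIV. canonical_char (x::'a)) * canonical_char a"
    by simp
  thus ?thesis using a by (simp only: mult_cancel_left) auto
qed

lemma char_sum_lin: "(\<Sum>x\<in>UNIV. canonical_char (c * (x::'a::{finite,field}))) = (if c = 0 then of_nat CARD('a) else 0)"
proof (cases "c = 0")
  case False
  have "(\<Sum>x\<in>UNIV. canonical_char (x::'a)) = (\<Sum>x\<in>UNIV. canonical_char (c * x))"
    by (rule sum.reindex_bij_witness[of _ "\<lambda>x. c * x" "\<lambda>x. x / c"]) (use False in auto)
  thus ?thesis using False char_sum_all[where 'a='a] by simp
qed simp



definition mk2 :: "'a \<Rightarrow> 'a \<Rightarrow> 'a \<Rightarrow> 'a \<Rightarrow> 'a^2^2" where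
  "mk2 a b c d = (\<chi> i j. if i = 1 then (if j = 1 then a else b) else (if j = 1 then c else d))"

lemma mk2_comp [simp]:
  "mk2 a b c d $ 1 $ 1 = a" "mk2 a b c d $ 1 $ 2 = b" "mk2 a b c d $ 2 $ 1 = c" "mk2 a b c d $ 2 $ 2 = d"
  by (simp_all add: mk2_def)

lemma mk2_eta: "mk2 (S$1$1) (S$1$2) (S$2$1) (S$2$2) = S"
  by (simp add: vec_eq_iff forall_2)

lemma mat2_eq_iff: "(S::'a^2^2) = T \<longleftrightarrow> S$1$1 = T$1$1 \<and> S$1$2 = T$1$2 \<and> S$2$1 = T$2$1 \<and> S$2$2 = T$2$2"
  by (auto simp: vec_eq_iff forall_2)

lemma sum_mat2:
  fixes f :: "'a::finite^2^2 \<Rightarrow> 'b::comm_monoid_add"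
  shows "(\<Sum>S\<in>UNIV. f S) = (\<Sum>a\<in>UNIV. \<Sum>d\<in>UNIV. \<Sum>b\<in>UNIV. \<Sum>c\<in>UNIV. f (mk2 a b c d))"
proof -
  have "(\<Sum>S\<in>UNIV. f S) = (\<Sum>(a,d,b,c)\<in>UNIV. f (mk2 a b c d))"
    by (rule sum.reindex_bij_witness[of _ "\<lambda>(a,d,b,c). mk2 a b c d" "\<lambda>S. (S$1$1, S$2$2, S$1$2, S$2$1)"])
       (auto simp: mk2_eta)
  also have "\<dots> = (\<Sum>a\<in>UNIV. \<Sum>d\<in>UNIV. \<Sum>b\<in>UNIV. \<Sum>c\<in>UNIV. f (mk2 a b c d))"
    by (simp add: sum.cartesian_product UNIV_Times_UNIV[symmetric] del: UNIV_Times_UNIV)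
  finally show ?thesis .
qed

lemma sum_factor4:
  fixes f g :: "'a \<Rightarrow> 'a \<Rightarrow> 'b::comm_semiring_0"
  shows "(\<Sum>a\<in>A. \<Sum>d\<in>D. \<Sum>b\<in>B. \<Sum>c\<in>C. f a d * g b c) = (\<Sum>a\<in>A. \<Sum>d\<in>D. f a d) * (\<Sum>b\<in>B. \<Sum>c\<in>C. g b c)"
proof -
  have "(\<Sum>a\<in>A. \<Sum>d\<in>D. f a d) * (\<Sum>b\<in>B. \<Sum>c\<in>C. g b c) = (\<Sum>a\<in>A. \<Sum>d\<in>D. f a d * (\<Sum>b\<in>B. \<Sum>c\<in>C. g b c))"
    by (simp add: sum_distrib_right)
  also have "\<dots> = (\<Sum>a\<in>A. \<Sum>d\<in>D. \<Sum>b\<in>B. \<Sum>c\<in>C. f a d * g b c)"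
    by (simp add: sum_distrib_left)
  finally show ?thesis ..
qed

definition ip2 :: "'a::comm_ring_1^2^2 \<Rightarrow> 'a^2^2 \<Rightarrow> 'a" where
  "ip2 S B = S$1$1*B$1$1 + S$1$2*B$1$2 + S$2$1*B$2$1 + S$2$2*B$2$2"

lemma ip2_add: "ip2 (S + A) B = ip2 S B + ip2 A B"
  by (simp add: ip2_def algebra_simps)

lemma ip2_sym: "ip2 A B = ip2 B A"
  by (simp add: ip2_def mult.commute)

lemma ip2_diff2: "ip2 A (B - C) = ip2 A B - ip2 A C"
  by (simp add: ip2_def algebra_simps)

lemma ip2_zero [simp]: "ip2 A 0 = 0"
  by (simp add: ip2_def)

abbreviation chi where "chi \<equiv> canonical_char"

lemma char_orth:
  fixes C :: "'a::{finite,field}^2^2"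
  shows "(\<Sum>A\<in>UNIV. chi (ip2 A C)) = (if C = 0 then of_nat CARD('a) ^ 4 else 0)"
proof -
  have "(\<Sum>A\<in>UNIV. chi (ip2 A C)) =
    (\<Sum>a\<in>UNIV. \<Sum>d\<in>UNIV. \<Sum>b\<in>UNIV. \<Sum>c\<in>UNIV. (chi (C$1$1 * a) * chi (C$2$2 * d)) * (chi (C$1$2 * b) * chi (C$2$1 * c)))"
    by (subst sum_mat2) (simp add: ip2_def char_add[symmetric] algebra_simps)
  also have "\<dots> = ((\<Sum>a\<in>UNIV. chi (C$1$1 * a)) * (\<Sum>d\<in>UNIV. chi (C$2$2 * d))) *
       ((\<Sum>b\<in>UNIV. chi (C$1$2 * b)) * (\<Sum>c\<in>UNIV. chi (C$2$1 * c)))"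
    by (simp only: sum_factor4 sum_product)
  also have "\<dots> = (if C = 0 then of_nat CARD('a) ^ 4 else 0)"
    unfolding char_sum_lin by (auto simp: mat2_eq_iff[of C 0] eval_nat_numeral mult_ac)
  finally show ?thesis .
qed

lemma char_L:
  fixes t x w :: "'a::{finite,field}"
  shows "(\<Sum>a\<in>UNIV. \<Sum>d\<in>UNIV. chi (t*a*d + a*x + d*w)) =
     (if t = 0 then (if x = 0 \<and> w = 0 then of_nat CARD('a) ^ 2 else 0)
      else of_nat CARD('a) * chi (- (x * w) / t))"
proof -
  have "(\<Sum>a\<in>UNIV. \<Sum>d\<in>UNIV. chi (t*a*d + a*x + d*w)) =
        (\<Sum>d\<in>UNIV. chi (w * d) * (\<Sum>a\<in>UNIV. chi ((t*d + x) * a)))"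
    by (subst sum.swap) (simp add: sum_distrib_left char_add[symmetric] algebra_simps)
  also have "\<dots> = (\<Sum>d\<in>UNIV. chi (w * d) * (if t*d + x = 0 then of_nat CARD('a) else 0))"
    by (simp only: char_sum_lin)
  also have "\<dots> = (if t = 0 then (if x = 0 \<and> w = 0 then of_nat CARD('a) ^ 2 else 0)
      else of_nat CARD('a) * chi (- (x * w) / t))"
  proof (cases "t = 0")
    case True
    then show ?thesis
      by (auto simp: sum_distrib_right[symmetric] char_sum_lin power2_eq_square)
  next
    case False
    have "(\<Sum>d\<in>UNIV. chi (w * d) * (if t*d + x = 0 then of_nat CARD('a) else 0))
        = (\<Sum>d\<in>UNIV. if d = - x / t then chi (w * d) * of_nat CARD('a) else 0)"
    proof (intro sum.cong refl)
      fix d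
      have "t*d + x = 0 \<longleftrightarrow> t*d = - x" using eq_neg_iff_add_eq_0[of "t*d" x] by simp
      also have "\<dots> \<longleftrightarrow> d = - x / t" using False eq_divide_eq[of d "-x" t] by (metis mult.commute)
      finally have "t*d + x = 0 \<longleftrightarrow> d = - x / t" .
      thus "chi (w * d) * (if t*d + x = 0 then of_nat CARD('a) else 0) =
           (if d = - x / t then chi (w * d) * of_nat CARD('a) else 0)" by simp
    qed
    also have "\<dots> = chi (w * (- x / t)) * of_nat CARD('a)"
      by (simp add: sum.delta)
    also have "w * (- x / t) = - (x * w) / t" by (simp add: algebra_simps)
    finally show ?thesis using False by (simp add: mult.commute)
  qed
  finally show ?thesis .
qed



lemma indicator_char:
  "(if (e::'a::{finite,field}) = 0 then 1 else 0 :: complex) = (1 / of_nat CARD('a)) * (\<Sum>t\<in>UNIV. chi (t * e))"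
  using char_sum_lin[of e] by (simp add: mult.commute)

lemma inner_sum:
  fixes t \<delta> :: "'a::{finite,field}" and B :: "'a^2^2"
  shows "(\<Sum>S\<in>UNIV. chi (t * (det S - \<delta>) + ip2 S B)) =
     (if t = 0 then (if B = 0 then of_nat CARD('a) ^ 4 else 0)
      else of_nat CARD('a) ^ 2 * chi (- t * \<delta> - det B / t))"
proof -
  define x where "x = B$1$1"
  define y where "y = B$1$2"
  define z where "z = B$2$1"
  define w where "w = B$2$2"
  have "(\<Sum>S\<in>UNIV. chi (t * (det S - \<delta>) + ip2 S B)) =
     (\<Sum>a\<in>UNIV. \<Sum>d\<in>UNIV. \<Sum>b\<in>UNIV. \<Sum>c\<in>UNIV.
        chi (- t * \<delta>) * (chi (t*a*d + a*x + d*w) * chi ((-t)*b*c + b*y + c*z)))"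
    by (subst sum_mat2) (simp add: ip2_def det_2 x_def y_def z_def w_def char_add[symmetric] algebra_simps)
  also have "\<dots> = chi (- t * \<delta>) * (\<Sum>a\<in>UNIV. \<Sum>d\<in>UNIV. \<Sum>b\<in>UNIV. \<Sum>c\<in>UNIV.
        chi (t*a*d + a*x + d*w) * chi ((-t)*b*c + b*y + c*z))"
    by (simp add: sum_distrib_left)
  also have "\<dots> = chi (- t * \<delta>) * ((\<Sum>a\<in>UNIV. \<Sum>d\<in>UNIV. chi (t*a*d + a*x + d*w)) *
        (\<Sum>b\<in>UNIV. \<Sum>c\<in>UNIV. chi ((-t)*b*c + b*y + c*z)))"
    by (simp only: sum_factor4)
  also have "\<dots> = chi (- t * \<delta>) *
      ((if t = 0 then (if x = 0 \<and> w = 0 then of_nat CARD('a) ^ 2 else 0)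
      else of_nat CARD('a) * chi (- (x * w) / t)) *
       (if -t = 0 then (if y = 0 \<and> z = 0 then of_nat CARD('a) ^ 2 else 0)
      else of_nat CARD('a) * chi (- (y * z) / (-t))))"
    by (simp only: char_L)
  also have "\<dots> = (if t = 0 then (if B = 0 then of_nat CARD('a) ^ 4 else 0)
      else of_nat CARD('a) ^ 2 * chi (- t * \<delta> - det B / t))"
  proof (cases "t = 0")
    case True
    have "B = 0 \<longleftrightarrow> x = 0 \<and> y = 0 \<and> z = 0 \<and> w = 0"
      by (simp add: mat2_eq_iff[of B 0] x_def y_def z_def w_def)
    then show ?thesis using True by (auto simp: eval_nat_numeral mult_ac)
  next
    case False
    have e: "- t * \<delta> + (- (x * w) / t + - (y * z) / (- t)) = - t * \<delta> - det B / t"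
      by (simp add: det_2 x_def y_def z_def w_def diff_divide_distrib)
    have "chi (- t * \<delta>) * (of_nat CARD('a) * chi (- (x * w) / t) * (of_nat CARD('a) * chi (- (y * z) / (-t))))
        = of_nat CARD('a) ^ 2 * (chi (- t * \<delta>) * (chi (- (x * w) / t) * chi (- (y * z) / (-t))))"
      by (simp add: power2_eq_square mult_ac)
    also have "\<dots> = of_nat CARD('a) ^ 2 * chi (- t * \<delta> - det B / t)"
      by (simp only: char_add[symmetric] e)
    finally show ?thesis using False by simp
  qed
  finally show ?thesis .
qed

lemma main_sum:
  fixes \<delta> :: "'a::{finite,field}" and B :: "'a^2^2"
  shows "(\<Sum>S\<in>UNIV. if det S = \<delta> then chi (ip2 S B) else 0) =
    (if B = 0 then of_nat CARD('a) ^ 3 else 0) +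
    of_nat CARD('a) * (\<Sum>t\<in>{t. t \<noteq> 0}. chi (- t * \<delta> - det B / t))"
proof -
  let ?q = "of_nat CARD('a) :: complex"
  have q0: "?q \<noteq> 0" by simp
  have "(\<Sum>S\<in>UNIV. if det S = \<delta> then chi (ip2 S B) else 0) =
      (\<Sum>S\<in>UNIV. (1 / ?q) * (\<Sum>t\<in>UNIV. chi (t * (det S - \<delta>))) * chi (ip2 S B))"
  proof (intro sum.cong refl)
    fix S :: "'a^2^2"
    have "(if det S = \<delta> then chi (ip2 S B) else 0) = (if det S - \<delta> = 0 then 1 else 0) * chi (ip2 S B)"
      by simp
    thus "(if det S = \<delta> then chi (ip2 S B) else 0) = (1 / ?q) * (\<Sum>t\<in>UNIV. chi (t * (det S - \<delta>))) * chi (ip2 S B)"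
      by (simp only: indicator_char)
  qed
  also have "\<dots> = (1 / ?q) * (\<Sum>t\<in>UNIV. \<Sum>S\<in>UNIV. chi (t * (det S - \<delta>) + ip2 S B))"
    by (subst sum.swap) (simp add: sum_distrib_left sum_distrib_right char_add mult_ac)
  also have "\<dots> = (1 / ?q) * (\<Sum>t\<in>UNIV. (if t = 0 then (if B = 0 then ?q ^ 4 else 0)
      else ?q ^ 2 * chi (- t * \<delta> - det B / t)))"
    by (simp only: inner_sum)
  also have "(\<Sum>t\<in>UNIV. (if t = 0 then (if B = 0 then ?q ^ 4 else 0)
      else ?q ^ 2 * chi (- t * \<delta> - det B / t))) =
      (if B = 0 then ?q ^ 4 else 0) + (\<Sum>t\<in>{t. t \<noteq> 0}. ?q ^ 2 * chi (- t * \<delta> - det B / t))"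
  proof -
    have u: "UNIV - {0::'a} = {t. t \<noteq> 0}" by auto
    show ?thesis
      by (subst sum.remove[of UNIV 0]) (simp_all add: u)
  qed
  also have "(1 / ?q) * ((if B = 0 then ?q ^ 4 else 0) + (\<Sum>t\<in>{t. t \<noteq> 0}. ?q ^ 2 * chi (- t * \<delta> - det B / t)))
     = (if B = 0 then ?q ^ 3 else 0) + ?q * (\<Sum>t\<in>{t. t \<noteq> 0}. chi (- t * \<delta> - det B / t))"
    using q0 by (simp add: sum_distrib_left[symmetric] field_simps power2_eq_square eval_nat_numeral)
  finally show ?thesis .
qed



lemma charpoly_diag:
  fixes M V W :: "complex^'n^'n" and lam :: "'n \<Rightarrow> complex" and N :: complex
  assumes MV: "\<And>A B. (\<Sum>C\<in>UNIV. M$A$C * V$C$B) = V$A$B * lam B"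
    and WV: "\<And>B B'. (\<Sum>A\<in>UNIV. W$B$A * V$A$B') = (if B = B' then N else 0)"
    and N: "N \<noteq> 0"
  shows "char_poly_mat M = (\<Prod>B\<in>UNIV. [:- lam B, 1:])"
proof -
  define Kp :: "complex poly^'n^'n" where "Kp = (\<chi> i j. (if i = j then [:0, 1:] else 0) - [: M $ i $ j :])"
  define Vp :: "complex poly^'n^'n" where "Vp = (\<chi> i j. [: V $ i $ j :])"
  define Wp :: "complex poly^'n^'n" where "Wp = (\<chi> i j. [: W $ i $ j :])"
  define Dp :: "complex poly^'n^'n" where "Dp = (\<chi> i j. if i = j then [:- lam i, 1:] else 0)"
  define Ip :: "complex poly^'n^'n" where "Ip = (\<chi> i j. if i = j then [:N:] else 0)"
  have KV: "Kp ** Vp = Vp ** Dp"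
  proof -
    have "(Kp ** Vp) $ A $ B = (Vp ** Dp) $ A $ B" for A B
    proof -
      have "(Kp ** Vp) $ A $ B = (\<Sum>C\<in>UNIV. (if A = C then [:0, 1:] * [:V$C$B:] else 0) - [:M$A$C * V$C$B:])"
        unfolding matrix_matrix_mult_def Kp_def Vp_def
        by (simp, intro sum.cong refl) (auto simp: mult_to_poly algebra_simps)
      also have "\<dots> = [:0, 1:] * [:V$A$B:] - [:V$A$B * lam B:]"
        by (simp add: sum_subtractf sum_to_poly MV)
      also have "\<dots> = [:V$A$B:] * [:- lam B, 1:]"
        by simp
      also have "\<dots> = (Vp ** Dp) $ A $ B"
        by (simp add: matrix_matrix_mult_def Vp_def Dp_def if_distrib cong: if_cong)
      finally show ?thesis .
    qed
    thus ?thesis by (simp add: vec_eq_iff)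
  qed
  have WVp: "Wp ** Vp = Ip"
  proof -
    have "(Wp ** Vp) $ B $ B' = Ip $ B $ B'" for B B'
      using WV[of B B'] by (simp add: matrix_matrix_mult_def Wp_def Vp_def Ip_def mult_to_poly sum_to_poly mult.commute)
    thus ?thesis by (simp add: vec_eq_iff)
  qed
  have detI: "det Ip = [:N:] ^ CARD('n)"
    by (subst det_diagonal) (simp_all add: Ip_def)
  have detI0: "det Ip \<noteq> 0" using N by (simp add: detI)
  have detD: "det Dp = (\<Prod>B\<in>UNIV. [:- lam B, 1:])"
    by (subst det_diagonal) (simp_all add: Dp_def)
  have "det Wp * det Vp * det Kp = det (Wp ** (Kp ** Vp))"
    by (simp add: det_mul mult_ac)
  also have "\<dots> = det ((Wp ** Vp) ** Dp)"
    by (simp add: KV matrix_mul_assoc)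
  also have "\<dots> = det Ip * det Dp" by (simp add: WVp det_mul)
  also have "det Ip = det Wp * det Vp" by (simp add: WVp[symmetric] det_mul)
  finally have "det Wp * det Vp * det Kp = det Wp * det Vp * det Dp" .
  moreover have "det Wp * det Vp \<noteq> 0" using detI0 by (simp add: WVp[symmetric] det_mul)
  ultimately have "det Kp = det Dp" by simp
  thus ?thesis unfolding char_poly_mat_def Kp_def[symmetric] detD .
qed



definition Kf :: "'a::{finite,field} \<Rightarrow> complex" where
  "Kf \<Delta> = (\<Sum>\<alpha>\<in>{\<alpha>::'a. \<alpha> \<noteq> 0}. chi (\<alpha> + \<Delta> * inverse \<alpha>))"

definition lam :: "'a::{finite,field}^2^2 \<Rightarrow> complex" where
  "lam B = (\<Sum>S\<in>UNIV. if det S = 1 then chi (ip2 S B) else 0)"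

lemma Kf_reindex: "(\<Sum>t\<in>{t::'a::{finite,field}. t \<noteq> 0}. chi (- t * 1 - \<Delta> / t)) = Kf \<Delta>"
  unfolding Kf_def
  by (rule sum.reindex_bij_witness[of _ uminus uminus]) (auto simp: divide_inverse)

lemma lam_eq: "lam B = (if B = 0 then of_nat CARD('a) ^ 3 else 0) + of_nat CARD('a) * Kf (det (B::'a::{finite,field}^2^2))"
  unfolding lam_def main_sum Kf_reindex ..

lemma Kf_0: "Kf (0::'a::{finite,field}) = -1"
proof -
  have "(\<Sum>x\<in>UNIV. chi (x::'a)) = chi (0::'a) + (\<Sum>x\<in>UNIV - {0}. chi (x::'a))"
    by (rule sum.remove) auto
  moreover have "UNIV - {0::'a} = {\<alpha>. \<alpha> \<noteq> 0}" by auto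
  ultimately show ?thesis using char_sum_all[where 'a='a] unfolding Kf_def by (simp add: add_eq_0_iff)
qed

lemma card_det:
  "of_nat (card {B::'a::{finite,field}^2^2. det B = \<delta>}) =
     of_nat CARD('a) ^ 3 + of_nat CARD('a) * ((if \<delta> = 0 then of_nat CARD('a) else 0) - (1::complex))"
proof -
  have "of_nat (card {B::'a^2^2. det B = \<delta>}) = (\<Sum>S\<in>{B::'a^2^2. det B = \<delta>}. (1::complex))" by simp
  also have "\<dots> = (\<Sum>S\<in>UNIV. if det S = \<delta> then chi (ip2 S (0::'a^2^2)) else 0)"
    by (subst sum.inter_filter[symmetric]) simp_all
  also have "\<dots> = of_nat CARD('a) ^ 3 + of_nat CARD('a) * (\<Sum>t\<in>{t::'a. t \<noteq> 0}. chi (- t * \<delta>))"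
    unfolding main_sum by (simp add: det_2)
  also have "(\<Sum>t\<in>{t::'a. t \<noteq> 0}. chi (- t * \<delta>)) = (if \<delta> = 0 then of_nat CARD('a) else 0) - 1"
  proof -
    have "(\<Sum>t\<in>UNIV. chi ((- \<delta>) * t)) = chi (- 0 * \<delta>) + (\<Sum>t\<in>UNIV - {0}. chi (- t * \<delta>))"
      by (subst sum.remove[of UNIV 0]) (simp_all add: mult.commute)
    moreover have "UNIV - {0::'a} = {\<alpha>. \<alpha> \<noteq> 0}" by auto
    ultimately show ?thesis unfolding char_sum_lin by simp
  qed
  finally show ?thesis .
qed

lemma card_det_nz:
  assumes "\<delta> \<noteq> 0"
  shows "card {B::'a::{finite,field}^2^2. det B = \<delta>} = CARD('a) ^ 3 - CARD('a)"
proof -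
  have le: "CARD('a) \<le> CARD('a) ^ 3"
    by (rule self_le_power) (auto simp: Suc_le_eq)
  have "(of_nat (card {B::'a^2^2. det B = \<delta>}) :: complex) = of_nat (CARD('a) ^ 3 - CARD('a))"
    using card_det[of \<delta>] assms le by (simp add: of_nat_diff algebra_simps)
  thus ?thesis using of_nat_eq_iff by blast
qed

lemma card_det_z:
  "card {B::'a::{finite,field}^2^2. det B = 0} = CARD('a) ^ 3 + CARD('a) ^ 2 - CARD('a)"
proof -
  have le: "CARD('a) \<le> CARD('a) ^ 3 + CARD('a) ^ 2"
    by (metis le_add2 power2_nat_le_imp_le)
  have "(of_nat (card {B::'a^2^2. det B = 0}) :: complex) = of_nat (CARD('a) ^ 3 + CARD('a) ^ 2 - CARD('a))"
    using card_det[of "0::'a"] le by (simp add: of_nat_diff algebra_simps power2_eq_square)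
  thus ?thesis using of_nat_eq_iff by blast
qed

lemma charpoly_lam:
  "char_poly_mat (special_unit_adj :: complex ^ ('a::{finite,field} ^ 2 ^ 2) ^ ('a ^ 2 ^ 2)) =
     (\<Prod>B\<in>UNIV. [:- lam (B::'a^2^2), 1:])"
proof (rule charpoly_diag[where V = "\<chi> (A::'a^2^2) (B::'a^2^2). chi (ip2 A B)" and W = "\<chi> (B::'a^2^2) (A::'a^2^2). chi (- ip2 A B)"
        and N = "of_nat CARD('a) ^ 4"])
  fix A B :: "'a^2^2"
  have "(\<Sum>C\<in>UNIV. special_unit_adj $ A $ C * (\<chi> A B. chi (ip2 A B)) $ C $ B)
      = (\<Sum>C\<in>UNIV. if det (C - A) = 1 then chi (ip2 C B) else 0)"
    by (intro sum.cong refl) (simp add: special_unit_adj_def)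
  also have "\<dots> = (\<Sum>S\<in>UNIV. if det S = 1 then chi (ip2 (S + A) B) else 0)"
    by (rule sum.reindex_bij_witness[of _ "\<lambda>S. S + A" "\<lambda>S. S - A"]) auto
  also have "\<dots> = (\<Sum>S\<in>UNIV. chi (ip2 A B) * (if det S = 1 then chi (ip2 S B) else 0))"
    by (intro sum.cong refl) (simp add: ip2_add char_add mult.commute)
  also have "\<dots> = chi (ip2 A B) * lam B"
    by (simp add: lam_def sum_distrib_left)
  finally show "(\<Sum>C\<in>UNIV. special_unit_adj $ A $ C * (\<chi> A B. chi (ip2 A B)) $ C $ B) =
      (\<chi> A B. chi (ip2 A B)) $ A $ B * lam B" by simp
next
  fix B B' :: "'a^2^2"
  have "(\<Sum>A\<in>UNIV. (\<chi> B A. chi (- ip2 A B)) $ B $ A * (\<chi> A B. chi (ip2 A B)) $ A $ B')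
      = (\<Sum>A\<in>UNIV. chi (ip2 A (B' - B)))"
    by (intro sum.cong refl) (simp add: ip2_diff2 char_add[symmetric])
  also have "\<dots> = (if B = B' then of_nat CARD('a) ^ 4 else 0)"
    by (simp add: char_orth)
  finally show "(\<Sum>A\<in>UNIV. (\<chi> B A. chi (- ip2 A B)) $ B $ A * (\<chi> A B. chi (ip2 A B)) $ A $ B')
      = (if B = B' then of_nat CARD('a) ^ 4 else 0)" .
qed simp



theorem theorem3p12:
  fixes T :: "'a::{finite,field} itself"
  defines "q \<equiv> CARD('a)"
  shows "char_poly_mat (special_unit_adj :: complex ^ ('a ^ 2 ^ 2) ^ ('a ^ 2 ^ 2)) =
           [: - (of_nat q ^ 3 - of_nat q), 1 :]
         * [: of_nat q, 1 :] ^ (q ^ 3 + q ^ 2 - q - 1)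
         * (\<Prod>\<delta>\<in>{\<delta>::'a. \<delta> \<noteq> 0}.
              [: - (of_nat q * (\<Sum>\<alpha>\<in>{\<alpha>::'a. \<alpha> \<noteq> 0}. canonical_char (\<alpha> + \<delta> * inverse \<alpha>))), 1 :]
                ^ (q ^ 3 - q))"
proof -
  define F where "F = (\<lambda>B::'a^2^2. [:- lam B, 1:])"
  define Z where "Z = {B::'a^2^2. det B = 0}"
  have det0: "det (0::'a^2^2) = 0" by (simp add: det_2)
  have "char_poly_mat (special_unit_adj :: complex ^ ('a ^ 2 ^ 2) ^ ('a ^ 2 ^ 2)) = prod F UNIV"
    unfolding F_def by (rule charpoly_lam)
  also have "\<dots> = prod F (UNIV - Z) * prod F Z"
    by (rule prod.subset_diff) auto
  also have "prod F Z = F 0 * prod F (Z - {0})"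
    by (rule prod.remove) (auto simp: Z_def det0)
  also have "F 0 = [: - (of_nat q ^ 3 - of_nat q), 1 :]"
    by (simp add: F_def lam_eq det0 Kf_0 q_def)
  also have "prod F (Z - {0}) = [: of_nat q, 1 :] ^ (q ^ 3 + q ^ 2 - q - 1)"
  proof -
    have "prod F (Z - {0}) = (\<Prod>B\<in>Z - {0}. [: of_nat q, 1 :])"
      by (intro prod.cong refl) (auto simp: F_def lam_eq Z_def Kf_0 q_def)
    also have "\<dots> = [: of_nat q, 1 :] ^ card (Z - {0})" by simp
    also have "card (Z - {0}) = q ^ 3 + q ^ 2 - q - 1"
      using card_det_z[where 'a='a] by (simp add: Z_def det0 q_def)
    finally show ?thesis .
  qed
  also have "prod F (UNIV - Z) = (\<Prod>\<delta>\<in>{\<delta>::'a. \<delta> \<noteq> 0}.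
              [: - (of_nat q * (\<Sum>\<alpha>\<in>{\<alpha>::'a. \<alpha> \<noteq> 0}. canonical_char (\<alpha> + \<delta> * inverse \<alpha>))), 1 :]
                ^ (q ^ 3 - q))"
  proof -
    have "prod F (UNIV - Z) = (\<Prod>\<delta>\<in>{\<delta>::'a. \<delta> \<noteq> 0}. prod F {x. x \<in> UNIV - Z \<and> det x = \<delta>})"
      by (rule prod.group[symmetric]) (auto simp: Z_def)
    also have "\<dots> = (\<Prod>\<delta>\<in>{\<delta>::'a. \<delta> \<noteq> 0}.
              [: - (of_nat q * (\<Sum>\<alpha>\<in>{\<alpha>::'a. \<alpha> \<noteq> 0}. canonical_char (\<alpha> + \<delta> * inverse \<alpha>))), 1 :]
                ^ (q ^ 3 - q))"
    proof (intro prod.cong refl)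
      fix \<delta> :: 'a assume "\<delta> \<in> {\<delta>. \<delta> \<noteq> 0}"
      hence d: "\<delta> \<noteq> 0" by simp
      have s: "{x. x \<in> UNIV - Z \<and> det x = \<delta>} = {B. det B = \<delta>}" using d by (auto simp: Z_def)
      have "prod F {B. det B = \<delta>} = (\<Prod>B\<in>{B::'a^2^2. det B = \<delta>}.
           [: - (of_nat q * (\<Sum>\<alpha>\<in>{\<alpha>::'a. \<alpha> \<noteq> 0}. canonical_char (\<alpha> + \<delta> * inverse \<alpha>))), 1 :])"
      proof (intro prod.cong refl)
        fix B :: "'a^2^2" assume "B \<in> {B. det B = \<delta>}"
        hence "det B = \<delta>" "B \<noteq> 0" using d det0 by auto
        thus "F B = [: - (of_nat q * (\<Sum>\<alpha>\<in>{\<alpha>::'a. \<alpha> \<noteq> 0}. canonical_char (\<alpha> + \<delta> * inverse \<alpha>))), 1 :]"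
          by (simp add: F_def lam_eq Kf_def q_def)
      qed
      also have "\<dots> = [: - (of_nat q * (\<Sum>\<alpha>\<in>{\<alpha>::'a. \<alpha> \<noteq> 0}. canonical_char (\<alpha> + \<delta> * inverse \<alpha>))), 1 :]
                ^ (q ^ 3 - q)"
        using card_det_nz[OF d] by (simp add: q_def)
      finally show "prod F {x. x \<in> UNIV - Z \<and> det x = \<delta>} = [: - (of_nat q * (\<Sum>\<alpha>\<in>{\<alpha>::'a. \<alpha> \<noteq> 0}. canonical_char (\<alpha> + \<delta> * inverse \<alpha>))), 1 :]
                ^ (q ^ 3 - q)" unfolding s .
    qed
    finally show ?thesis .
  qed
  finally show ?thesis by (simp only: mult_ac)
qed

end
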